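(* Assume $\sigma_1(x)\equiv\sigma_1(0)\ne0$ is constant, so that $\sigma_2(x)=(q-1)\tau'(0)x^2+(q-1)\tau(0)x+q\sigma_1(0)=\tfrac12\sigma_2''(0)(x-a_2)(x-b_2)$, and assume its zeros are real with $0<a_2\le b_2$ and that $\Lambda_q:=\tau'(0)/\sigma_1(0)<0$. Put $a=b_2$ and $$\rho(x)=|x|^{\alpha}x^{\log_qx-1}\,(qa_2/x,\,qa/x;q)_\infty,\qquad q^{\alpha}=\frac{q^{-1}\tfrac12\sigma_2''(0)}{\sigma_1(0)}.$$ Then there exist polynomials $P_n$, $n\in\mathbb{N}_0$, with $P_n$ of degree $n$ a solution of the q-EHT with $\lambda=\lambda_n$, and nonzero constants $d_n^2$, such that for all $m,n\in\mathbb{N}_0$ $$\int_a^{\infty}P_n(x)P_m(x)\rho(x)\,d_{q^{-1}}x=d_n^2\delta_{mn},$$ i.e. orthogonality with respect to $\rho$ supported on $\{q^{-k}a\}_{k\in\mathbb{N}_0}$.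
   Context: Throughout $0<q<1$. For a function $y$ and $\zeta\in\{q,q^{-1}\}$, $D_\zeta y(x)=\frac{y(x)-y(\zeta x)}{(1-\zeta)x}$ for $x\ne0$ and $D_\zeta y(0)=y'(0)$; $[n]_q=\frac{1-q^n}{1-q}$. Let $\sigma_1$ be a real polynomial of degree at most two, $\tau(x)=\tau'(0)x+\tau(0)$ a real polynomial with $\tau'(0)\ne0$, and $\sigma_2(x):=q[\sigma_1(x)+(1-q^{-1})x\tau(x)]$. The q-EHT with parameter $n$ is $\sigma_1(x)D_{q^{-1}}D_qy(x)+\tau(x)D_qy(x)+\lambda_ny(x)=0$, $\lambda_n=-[n]_q\big(\tau'(0)+\tfrac12[n-1]_{q^{-1}}\sigma_1''(0)\big)$. $(\beta;q)_\infty=\prod_{k\ge0}(1-\beta q^k)$, $(\beta_1,\dots,\beta_r;q)_\infty=\prod_i(\beta_i;q)_\infty$. For $q^\alpha=c$ ($c\ne0$), $\alpha$ is any complex number with $e^{\alpha\ln q}=c$ and $|x|^\alpha:=e^{\alpha\ln|x|}$; for $x>0$, $x^{\log_qx-1}:=\exp\big((\log_qx-1)\ln x\big)$. For $a>0$, $\int_a^\infty f(x)\,d_{q^{-1}}x=(q^{-1}-1)a\sum_{j\ge0}q^{-j}f(q^{-j}a)$. *)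

theory Defs
  imports "HOL-Analysis.Analysis" "HOL-Computational_Algebra.Polynomial"
begin

definition qD :: "real \<Rightarrow> (real \<Rightarrow> real) \<Rightarrow> real \<Rightarrow> real" where
  "qD \<zeta> y x = (if x = 0 then deriv y 0 else (y x - y (\<zeta> * x)) / ((1 - \<zeta>) * x))"

definition qnum :: "real \<Rightarrow> real \<Rightarrow> real" where
  "qnum q n = (1 - q powr n) / (1 - q)"

definition qlambda :: "real \<Rightarrow> nat \<Rightarrow> real \<Rightarrow> real \<Rightarrow> real" where
  "qlambda q n tau1 s1pp = - qnum q (real n) * (tau1 + 1/2 * qnum (1/q) (real n - 1) * s1pp)"

definition qEHT :: "real \<Rightarrow> (real \<Rightarrow> real) \<Rightarrow> (real \<Rightarrow> real) \<Rightarrow> real \<Rightarrow> (real \<Rightarrow> real) \<Rightarrow> bool" where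
  "qEHT q \<sigma>1 \<tau> lam y \<longleftrightarrow>
     (\<forall>x. \<sigma>1 x * qD (1/q) (qD q y) x + \<tau> x * qD q y x + lam * y x = 0)"

definition qpoch_inf :: "real \<Rightarrow> real \<Rightarrow> real" where
  "qpoch_inf \<beta> q = (\<Prod>k. 1 - \<beta> * q ^ k)"

text \<open>Jackson integral int_a^infinity f(x) d_{q^-1}x = I, i.e. the defining series
  (q^-1 - 1) a sum_j q^-j f(q^-j a) converges to I.\<close>
definition jackson_inf_has :: "real \<Rightarrow> (real \<Rightarrow> complex) \<Rightarrow> real \<Rightarrow> complex \<Rightarrow> bool" where
  "jackson_inf_has q f a I \<longleftrightarrow>
     (\<lambda>j. of_real ((1/q - 1) * a * (1/q) ^ j) * f ((1/q) ^ j * a)) sums I"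

end

theory Submission
  imports Defs
begin


lemma qpoch_conv:
  fixes q \<beta> :: real
  assumes q: "0<q" "q<1" and b: "0 \<le> \<beta>" "\<beta> < 1"
  shows "convergent_prod (\<lambda>k. 1 - \<beta> * q ^ k)"
proof -
  have "summable (\<lambda>k. norm ((1 - \<beta> * q ^ k) - 1))"
    using q b by (simp add: summable_geometric summable_mult)
  then show ?thesis
    by (intro abs_convergent_prod_imp_convergent_prod summable_imp_abs_convergent_prod)
qed

lemma qpoch_pos:
  fixes q \<beta> :: real
  assumes q: "0<q" "q<1" and b: "0 \<le> \<beta>" "\<beta> < 1"
  shows "qpoch_inf \<beta> q > 0"
proof -
  have "(\<lambda>k. 1 - \<beta> * q ^ k) has_prod qpoch_inf \<beta> q"
    unfolding qpoch_inf_def using qpoch_conv[OF assms] convergent_prod_has_prod by blast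
  moreover have "1 - \<beta> * q ^ k > 0" for k
  proof -
    have "q ^ k \<le> 1" using q by (simp add: power_le_one)
    then have "\<beta> * q ^ k \<le> \<beta>" using b by (simp add: mult_left_le)
    then show ?thesis using b by linarith
  qed
  ultimately show ?thesis using has_prod_pos by blast
qed

lemma qpoch_shift:
  fixes q \<beta> :: real
  assumes q: "0<q" "q<1" and b: "0 \<le> \<beta>" "\<beta> < 1"
  shows "qpoch_inf (\<beta> * q) q = qpoch_inf \<beta> q / (1 - \<beta>)"
proof -
  have "(\<Prod>n. 1 - \<beta> * q ^ (Suc n)) = (\<Prod>k. 1 - \<beta> * q ^ k) / (1 - \<beta> * q ^ 0)"
    by (rule prodinf_split_head[where f = "\<lambda>k. 1 - \<beta> * q ^ k"]) (use qpoch_conv[OF assms] b in auto)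
  then show ?thesis unfolding qpoch_inf_def by (simp add: mult.assoc mult.commute)
qed

definition qn :: "real \<Rightarrow> nat \<Rightarrow> real" where
  "qn z k = (1 - z ^ k) / (1 - z)"

definition Dz :: "real \<Rightarrow> real poly \<Rightarrow> real poly" where
  "Dz z p = (\<Sum>k<degree p. monom (coeff p (Suc k) * qn z (Suc k)) k)"

lemma coeff_Dz: "coeff (Dz z p) i = coeff p (Suc i) * qn z (Suc i)"
proof -
  have "coeff (Dz z p) i = (\<Sum>k<degree p. if k = i then coeff p (Suc k) * qn z (Suc k) else 0)"
    unfolding Dz_def by (simp add: coeff_sum coeff_monom)
  also have "\<dots> = (if i < degree p then coeff p (Suc i) * qn z (Suc i) else 0)"
    by (simp add: sum.delta)
  also have "\<dots> = coeff p (Suc i) * qn z (Suc i)"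
    by (auto simp: coeff_eq_0)
  finally show ?thesis .
qed

lemma poly_sum_lt:
  fixes x :: real
  assumes "degree p < N"
  shows "poly p x = (\<Sum>i<N. coeff p i * x ^ i)"
proof -
  have "poly p x = (\<Sum>i\<le>degree p. coeff p i * x ^ i)" by (simp add: poly_altdef)
  also have "\<dots> = (\<Sum>i<N. coeff p i * x ^ i)"
    by (rule sum.mono_neutral_left) (use assms in \<open>auto simp: coeff_eq_0\<close>)
  finally show ?thesis .
qed

lemma qD_poly:
  assumes z: "z \<noteq> 1"
  shows "qD z (poly p) = poly (Dz z p)"
proof
  fix x :: real
  show "qD z (poly p) x = poly (Dz z p) x"
  proof (cases "x = 0")
    case True
    have "deriv (poly p) 0 = poly (pderiv p) 0"
      by (rule DERIV_imp_deriv) (rule poly_DERIV)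
    also have "\<dots> = coeff p 1" by (simp add: poly_0_coeff_0 coeff_pderiv)
    finally show ?thesis using True z
      by (simp add: qD_def poly_0_coeff_0 coeff_Dz qn_def)
  next
    case False
    define N where "N = Suc (degree p)"
    have dN: "degree p < N" "degree (Dz z p) < N"
    proof -
      show "degree p < N" by (simp add: N_def)
      have "degree (Dz z p) \<le> degree p"
        by (rule degree_le) (auto simp: coeff_Dz coeff_eq_0)
      then show "degree (Dz z p) < N" by (simp add: N_def)
    qed
    have "poly p x - poly p (z * x) = (\<Sum>i<N. coeff p i * (1 - z ^ i) * x ^ i)"
      by (simp add: poly_sum_lt[OF dN(1)] sum_subtractf[symmetric] power_mult_distrib algebra_simps)
    also have "\<dots> = (\<Sum>i<degree p. coeff p (Suc i) * (1 - z ^ Suc i) * x ^ Suc i)"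
      unfolding N_def sum.lessThan_Suc_shift by simp
    also have "\<dots> = (1 - z) * x * (\<Sum>i<degree p. coeff (Dz z p) i * x ^ i)"
      unfolding sum_distrib_left
    proof (rule sum.cong[OF refl])
      fix i
      have "1 - z \<noteq> 0" using z by simp
      then show "coeff p (Suc i) * (1 - z ^ Suc i) * x ^ Suc i = (1 - z) * x * (coeff (Dz z p) i * x ^ i)"
        by (simp add: coeff_Dz qn_def field_simps)
    qed
    also have "(\<Sum>i<degree p. coeff (Dz z p) i * x ^ i) = poly (Dz z p) x"
    proof -
      have "degree (Dz z p) \<le> degree p"
        by (rule degree_le) (auto simp: coeff_Dz coeff_eq_0)
      then have "degree (Dz z p) < Suc (degree p)" by simp
      then have "poly (Dz z p) x = (\<Sum>i<Suc (degree p). coeff (Dz z p) i * x ^ i)"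
        by (rule poly_sum_lt)
      also have "\<dots> = (\<Sum>i<degree p. coeff (Dz z p) i * x ^ i)"
        by (simp add: coeff_Dz coeff_eq_0)
      finally show ?thesis by simp
    qed
    finally show ?thesis using False z by (simp add: qD_def)
  qed
qed


lemma qn_0[simp]: "qn z 0 = 0" by (simp add: qn_def)

lemma qn_inj:
  fixes q :: real assumes q: "0<q" "q<1" and "qn q k = qn q n" shows "k = n"
proof -
  have "q ^ k = q ^ n" using assms by (simp add: qn_def divide_simps)
  then show ?thesis using q
    by (metis linorder_neqE_nat not_less_iff_gr_or_eq power_strict_decreasing)
qed

lemma eig_poly:
  fixes q s0 tau0 tau1 :: real and a :: "nat \<Rightarrow> real"
  assumes q: "0<q" "q<1"
    and az: "\<And>k. k > n \<Longrightarrow> a k = 0" and an: "a n = 1"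
    and rel: "\<And>k. s0 * a (k+2) * qn q (k+2) * qn (1/q) (k+1) + tau0 * a (k+1) * qn q (k+1)
                  + tau1 * (qn q k - qn q n) * a k = 0"
  shows "degree (\<Sum>k\<le>n. monom (a k) k) = n \<and> (\<Sum>k\<le>n. monom (a k) k) \<noteq> 0 \<and>
     qEHT q (\<lambda>x. s0) (\<lambda>x. tau1 * x + tau0)
               (qlambda q n tau1 (deriv (deriv (\<lambda>x. s0)) 0)) (poly (\<Sum>k\<le>n. monom (a k) k))"
proof -
  define P where "P = (\<Sum>k\<le>n. monom (a k) k)"
  have cP: "coeff P k = a k" for k
  proof -
    have "coeff P k = (\<Sum>j\<le>n. if j = k then a j else 0)"
      unfolding P_def by (simp add: coeff_sum coeff_monom)
    also have "\<dots> = a k" using az[of k] by (auto simp: sum.delta)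
    finally show ?thesis .
  qed
  have deg: "degree P = n"
  proof (rule antisym)
    show "degree P \<le> n" by (rule degree_le) (auto simp: cP az)
    show "n \<le> degree P" by (rule le_degree) (simp add: cP an)
  qed
  have d0: "deriv (\<lambda>x::real. s0) = (\<lambda>x. 0)"
    by (rule ext, rule DERIV_imp_deriv) simp
  have d1: "deriv (\<lambda>x::real. 0::real) 0 = 0"
    by (rule DERIV_imp_deriv) simp
  have lam: "qlambda q n tau1 (deriv (deriv (\<lambda>x. s0)) 0) = - qn q n * tau1"
    using q by (simp add: d0 d1 qlambda_def qnum_def qn_def powr_realpow)
  define R where "R = smult s0 (Dz (1/q) (Dz q P)) + [:tau0, tau1:] * Dz q P + smult (- qn q n * tau1) P"
  have R0: "R = 0"
  proof (rule poly_eqI)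
    fix k
    have "[:tau0, tau1:] * Dz q P = smult tau0 (Dz q P) + pCons 0 (smult tau1 (Dz q P))"
      by simp
    then have "coeff R k = s0 * a (k+2) * qn q (k+2) * qn (1/q) (k+1) + tau0 * a (k+1) * qn q (k+1)
          + (case k of 0 \<Rightarrow> 0 | Suc k' \<Rightarrow> tau1 * a k * qn q k) - qn q n * tau1 * a k"
      unfolding R_def by (simp add: coeff_Dz cP coeff_pCons split: nat.split)
    also have "\<dots> = 0" using rel[of k] by (cases k) (simp_all add: algebra_simps)
    finally show "coeff R k = coeff 0 k" by simp
  qed
  have qq: "1/q \<noteq> 1" "q \<noteq> 1" using q by auto
  have "qEHT q (\<lambda>x. s0) (\<lambda>x. tau1 * x + tau0) (- qn q n * tau1) (poly P)"
    unfolding qEHT_def qD_poly[OF qq(2)] qD_poly[OF qq(1)]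
  proof
    fix x
    have "poly R x = 0" by (simp add: R0)
    then show "s0 * poly (Dz (1 / q) (Dz q P)) x + (tau1 * x + tau0) * poly (Dz q P) x + - qn q n * tau1 * poly P x = 0"
      unfolding R_def by (simp add: algebra_simps)
  qed
  moreover have "P \<noteq> 0" using cP[of n] an by auto
  ultimately show ?thesis using deg lam unfolding P_def by simp
qed

fun gg :: "real \<Rightarrow> real \<Rightarrow> real \<Rightarrow> real \<Rightarrow> nat \<Rightarrow> nat \<Rightarrow> real" where
  "gg q s0 tau0 tau1 n 0 = 1"
| "gg q s0 tau0 tau1 n (Suc 0) = - (tau0 * qn q n) / (tau1 * (qn q (n-1) - qn q n))"
| "gg q s0 tau0 tau1 n (Suc (Suc i)) =
     - (s0 * gg q s0 tau0 tau1 n i * qn q (n-i) * qn (1/q) (n-i-1)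
        + tau0 * gg q s0 tau0 tau1 n (Suc i) * qn q (n-i-1)) / (tau1 * (qn q (n-i-2) - qn q n))"

lemma eig_exists:
  fixes q s0 tau0 tau1 :: real
  assumes q: "0<q" "q<1" and tau1: "tau1 \<noteq> 0"
  shows "\<exists>P. degree P = n \<and> P \<noteq> 0 \<and>
     qEHT q (\<lambda>x. s0) (\<lambda>x. tau1 * x + tau0)
               (qlambda q n tau1 (deriv (deriv (\<lambda>x. s0)) 0)) (poly P)"
proof -
  define a where "a k = (if k \<le> n then gg q s0 tau0 tau1 n (n-k) else 0)" for k
  have nz: "tau1 * (qn q k - qn q n) \<noteq> 0" if "k \<noteq> n" for k
    using tau1 qn_inj[OF q, of k n] that by auto
  have rel: "s0 * a (k+2) * qn q (k+2) * qn (1/q) (k+1) + tau0 * a (k+1) * qn q (k+1)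
                  + tau1 * (qn q k - qn q n) * a k = 0" for k
  proof -
    consider "n < k" | "k = n" | "Suc k = n" | "k + 2 \<le> n" by linarith
    then show ?thesis
    proof cases
      case 1 then show ?thesis by (simp add: a_def)
    next
      case 2 then show ?thesis by (simp add: a_def)
    next
      case 3
      have "a k = - (tau0 * qn q n) / (tau1 * (qn q (n-1) - qn q n))"
      proof -
        have "n - k = Suc 0" using 3 by simp
        then show ?thesis using 3 by (simp add: a_def)
      qed
      moreover have "a (k+1) = 1" "a (k+2) = 0" using 3 by (simp_all add: a_def)
      moreover have "n - 1 = k" using 3 by simp
      ultimately show ?thesis using nz[of k] 3 by (simp add: field_simps)
    next
      case 4
      define i where "i = n - k - 2"
      have e: "n - k = Suc (Suc i)" "n - Suc k = Suc i" "n - Suc (Suc k) = i"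
              "n - i = k + 2" "n - i - 1 = k + 1" "n - i - 2 = k"
        using 4 by (simp_all add: i_def)
      have "a k = - (s0 * a (k+2) * qn q (k+2) * qn (1/q) (k+1)
        + tau0 * a (k+1) * qn q (k+1)) / (tau1 * (qn q k - qn q n))"
        using 4 by (simp add: a_def e)
      then show ?thesis using nz[of k] 4 by (simp add: field_simps)
    qed
  qed
  show ?thesis
    by (rule exI, rule eig_poly[OF q _ _ rel]) (simp_all add: a_def)
qed


lemma sum_parts:
  fixes g F a h :: "nat \<Rightarrow> real"
  assumes a0: "a 0 = g 0 * F 0" and aS: "\<And>i. a (Suc i) = g (Suc i) * (F (Suc i) - F i)"
    and sa: "summable a" and sh: "summable (\<lambda>j. (g (Suc j) - g j) * F j)"
    and lim: "(\<lambda>j. g j * F j) \<longlonglongrightarrow> 0"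
  shows "suminf a = - suminf (\<lambda>j. (g (Suc j) - g j) * F j)"
proof -
  have ps: "(\<Sum>j<Suc n. a j) = g n * F n - (\<Sum>j<n. (g (Suc j) - g j) * F j)" for n
    by (induction n) (simp_all add: a0 aS algebra_simps)
  have "(\<lambda>n. \<Sum>j<Suc n. a j) \<longlonglongrightarrow> suminf a"
    using summable_LIMSEQ[OF sa] by (rule LIMSEQ_Suc)
  moreover have "(\<lambda>n. \<Sum>j<Suc n. a j) \<longlonglongrightarrow> 0 - suminf (\<lambda>j. (g (Suc j) - g j) * F j)"
    unfolding ps by (intro tendsto_diff lim summable_LIMSEQ sh)
  ultimately show ?thesis using LIMSEQ_unique by fastforce
qed

lemma Lop_alg:
  fixes x q ss t ua ub uc :: real
  assumes x: "x \<noteq> 0" and q: "0 < q" "q < 1"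
  shows "ss * (((ub - ua) / ((1 - q) * x) - (uc - ub) / ((1 - q) * (x / q))) / ((1 - 1/q) * x))
      + t * ((ub - ua) / ((1 - q) * x))
    = ss * q^2 / ((1-q)^2 * x^2) * (uc - ub) + (q * (ss + (1 - 1/q) * x * t)) / ((1-q)^2 * x^2) * (ua - ub)"
proof -
  have e2: "((ub - ua) / ((1 - q) * x) - (uc - ub) / ((1 - q) * (x / q))) / ((1 - 1/q) * x)
     = q^2 * (uc - ub) / ((1-q)^2 * x^2) + q * (ua - ub) / ((1-q)^2 * x^2)"
  proof -
    define D where "D = (1 - q) * x"
    have D: "D \<noteq> 0" using x q by (simp add: D_def)
    have q0: "q \<noteq> 0" using q by simp
    have 0: "(1 - q) * x = D" by (simp add: D_def)
    have 1: "(1 - q) * (x / q) = D / q" by (simp add: D_def)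
    have 2: "(1 - 1/q) * x = - D / q" using q0 by (simp add: D_def field_simps)
    have 3: "(1-q)^2 * x^2 = D * D" by (simp add: D_def power2_eq_square)
    show ?thesis unfolding 0 1 2 3 using D q0 by (simp add: field_simps) (simp add: algebra_simps power2_eq_square)
  qed
  define e where "e = 1 / ((1-q)^2 * x^2)"
  have de: "a / ((1-q)^2 * x^2) = a * e" for a by (simp add: e_def)
  have b: "(1-q)*x \<noteq> 0" using x q by simp
  have sq: "(1-q)^2*x^2 = ((1-q)*x)*((1-q)*x)" by (simp add: power2_eq_square)
  have "(ub-ua)/((1-q)*x) = ((1-q)*x)*(ub-ua)/(((1-q)*x)*((1-q)*x))"
    using b by simp
  then have 1: "t * ((ub - ua) / ((1 - q) * x)) = t * (1-q) * x * (ub - ua) * e"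
    unfolding sq[symmetric] de by simp
  have 2: "q * (ss + (1 - 1/q) * x * t) = q * ss + (q-1)*x*t" using q by (simp add: algebra_simps)
  show ?thesis unfolding e2 1 2 de by (simp add: algebra_simps)
qed


locale qsetup =
  fixes q s0 tau1 tau0 a2 b2 :: real
  assumes q: "0 < q" "q < 1"
    and s0: "s0 \<noteq> 0"
    and tau1: "tau1 \<noteq> 0"
    and fact: "\<forall>x. q * (s0 + (1 - 1/q) * x * (tau1 * x + tau0))
                    = (q - 1) * tau1 * (x - a2) * (x - b2)"
    and zeros: "0 < a2" "a2 \<le> b2"
    and Lam: "tau1 / s0 < 0"
begin

definition xs :: "nat \<Rightarrow> real" where "xs j = (1/q)^j * b2"
definition W :: "real \<Rightarrow> real" where
  "W x = exp ((ln x / ln q - 1) * ln x) * qpoch_inf (q * a2 / x) q * qpoch_inf (q * b2 / x) q"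
definition cr :: real where "cr = (1/q) * ((q - 1) * tau1) / s0"
definition w :: "nat \<Rightarrow> real" where "w j = (1/q - 1) * b2 * (1/q)^j * (1/cr)^j * W (xs j)"
definition sig :: "real \<Rightarrow> real" where "sig y = (q - 1) * tau1 * (y - a2) * (y - b2)"
definition A :: "real \<Rightarrow> real" where "A x = s0 * q^2 / ((1-q)^2 * x^2)"
definition B :: "real \<Rightarrow> real" where "B x = sig x / ((1-q)^2 * x^2)"
definition c :: "nat \<Rightarrow> real" where "c j = w j * A (xs j)"

lemma cr_pos: "cr > 0"
proof -
  have "(q - 1) * tau1 / s0 > 0" using q Lam
    by (metis diff_less_0_iff_less mult_neg_neg times_divide_eq_right)
  moreover have "cr = ((q - 1) * tau1 / s0) / q" by (simp add: cr_def)
  ultimately show ?thesis using q by (metis divide_pos_pos)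
qed

lemma xs_ge: "xs j \<ge> b2"
  unfolding xs_def using q zeros by (simp add: one_le_power)

lemma xs_pos: "xs j > 0" using xs_ge[of j] zeros by linarith

lemma xs_Suc: "xs (Suc j) = xs j / q" by (simp add: xs_def)

lemma W_pos: assumes "y \<ge> b2" shows "W y > 0"
proof -
  have y: "y > 0" using assms zeros by linarith
  have "q * a2 < a2" "q * b2 < b2" using q zeros by simp_all
  then have "q * a2 < y" "q * b2 < y" using assms zeros by linarith+
  then have "q * a2 / y < 1" "q * b2 / y < 1"
    using y by simp_all
  moreover have "q * a2 / y \<ge> 0" "q * b2 / y \<ge> 0" using q zeros y by simp_all
  ultimately show ?thesis unfolding W_def using qpoch_pos[OF q] by simp
qed

lemma w_pos: "w j > 0"
  unfolding w_def using q zeros cr_pos W_pos[OF xs_ge] by simp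

lemma W_ratio: assumes "y > b2" shows "W y * ((y - a2) * (y - b2)) = W (q * y)"
proof -
  have y: "y > 0" using assms zeros by linarith
  define l where "l = ln y"
  define L where "L = ln q"
  have L: "L \<noteq> 0" using q by (simp add: L_def)
  have E: "exp ((ln y / ln q - 1) * ln y) * y^2 = exp ((ln (q*y) / ln q - 1) * ln (q*y))"
  proof -
    have ey: "exp l = y" using y by (simp add: l_def)
    have sq: "y^2 = exp (2 * l)" using exp_of_nat_mult[of 2 l] ey by simp
    have lm: "ln (q*y) = L + l" using q y by (simp add: L_def l_def ln_mult)
    have ar: "(l / L - 1) * l + 2 * l = ((L + l) / L - 1) * (L + l)"
      using L by (simp add: field_simps)
    show ?thesis
      unfolding lm sq L_def[symmetric] l_def[symmetric] exp_add[symmetric] ar ..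
  qed
  have ba: "0 \<le> a2 / y" "a2 / y < 1" "0 \<le> b2 / y" "b2 / y < 1"
    using zeros assms y by (simp_all add: divide_simps)
  have ea: "q * a2 / y = (a2 / y) * q" "q * b2 / y = (b2 / y) * q" by simp_all
  have nz: "1 - a2 / y \<noteq> 0" "1 - b2 / y \<noteq> 0" using ba by auto
  have P1: "qpoch_inf (q * a2 / y) q * (1 - a2 / y) = qpoch_inf (a2 / y) q"
    unfolding ea qpoch_shift[OF q ba(1,2)] using nz by simp
  have P2: "qpoch_inf (q * b2 / y) q * (1 - b2 / y) = qpoch_inf (b2 / y) q"
    unfolding ea qpoch_shift[OF q ba(3,4)] using nz by simp
  have yy: "(y - a2) * (y - b2) = y^2 * (1 - a2/y) * (1 - b2/y)"
    using y by (simp add: field_simps power2_eq_square)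
  have "W y * ((y - a2) * (y - b2)) =
     (exp ((ln y / ln q - 1) * ln y) * y^2) * (qpoch_inf (q * a2 / y) q * (1 - a2 / y))
       * (qpoch_inf (q * b2 / y) q * (1 - b2 / y))"
    unfolding yy W_def by (simp only: mult_ac)
  also have "\<dots> = exp ((ln (q*y) / ln q - 1) * ln (q*y)) * qpoch_inf (a2 / y) q * qpoch_inf (b2 / y) q"
    unfolding E P1 P2 by (simp only: mult_ac)
  also have "\<dots> = W (q * y)"
  proof -
    have "q * a2 / (q * y) = a2 / y" "q * b2 / (q * y) = b2 / y" using q by simp_all
    then show ?thesis by (simp add: W_def)
  qed
  finally show ?thesis .
qed

lemma w_ratio: "w (Suc j) * sig (xs (Suc j)) = w j * s0"
proof -
  have gt: "xs (Suc j) > b2"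
    using xs_ge[of j] q zeros by (simp add: xs_Suc divide_simps) (smt (verit) mult_less_cancel_left2)
  have "W (xs (Suc j)) * ((xs (Suc j) - a2) * (xs (Suc j) - b2)) = W (xs j)"
    using W_ratio[OF gt] q by (simp add: xs_Suc)
  note h = this
  have "w (Suc j) * sig (xs (Suc j)) = ((1/q - 1) * b2 * (1/q)^j * (1/cr)^j) * ((1/q) * (1/cr) * (q - 1) * tau1)
      * (W (xs (Suc j)) * ((xs (Suc j) - a2) * (xs (Suc j) - b2)))"
    unfolding w_def sig_def by (simp only: power_Suc mult_ac)
  also have "(1/q) * (1/cr) * (q - 1) * tau1 = s0"
    using q s0 tau1 cr_pos by (simp add: cr_def field_simps)
  finally show ?thesis unfolding h unfolding w_def by (simp add: algebra_simps)
qed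

lemma c_alt: "c j = w (Suc j) * B (xs (Suc j))"
proof -
  have x: "xs j > 0" by (rule xs_pos)
  have "w (Suc j) * B (xs (Suc j)) = w j * s0 / ((1-q)^2 * (xs j / q)^2)"
    unfolding B_def using w_ratio[of j] by (simp add: xs_Suc)
  also have "\<dots> = c j" using q x by (simp add: c_def A_def field_simps)
  finally show ?thesis by simp
qed

lemma B0: "B (xs 0) = 0"
  by (simp add: B_def sig_def xs_def)

lemma Lop:
  assumes x: "x \<noteq> 0"
  shows "s0 * qD (1/q) (qD q f) x + (tau1 * x + tau0) * qD q f x
       = A x * (f (x / q) - f x) + B x * (f (q * x) - f x)"
proof -
  have sg: "sig x = q * (s0 + (1 - 1/q) * x * (tau1 * x + tau0))" using fact by (simp add: sig_def)
  have xq: "x / q \<noteq> 0" using x q by simp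
  have "qD (1/q) (qD q f) x = (qD q f x - qD q f (x / q)) / ((1 - 1/q) * x)"
    using x by (simp add: qD_def)
  also have "qD q f (x / q) = (f (x/q) - f x) / ((1 - q) * (x / q))"
    using xq q by (simp add: qD_def)
  also have "qD q f x = (f x - f (q * x)) / ((1 - q) * x)"
    using x by (simp add: qD_def)
  finally have e: "qD (1/q) (qD q f) x = ((f x - f (q * x)) / ((1 - q) * x) - (f (x/q) - f x) / ((1 - q) * (x / q))) / ((1 - 1/q) * x)" .
  have 3: "qD q f x = (f x - f (q * x)) / ((1 - q) * x)"
    using x by (simp add: qD_def)
  show ?thesis
    unfolding e 3 A_def B_def sg using Lop_alg[OF x q, where ss=s0 and t="tau1 * x + tau0" and ua="f (q * x)" and ub="f x" and uc="f (x/q)"]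
    by simp
qed

end



context qsetup begin

lemma b2_pos: "b2 > 0" using zeros by linarith

lemma xs_Suc_gt: "xs (Suc j) > b2"
  using xs_ge[of j] q zeros by (simp add: xs_Suc divide_simps) (smt (verit) mult_less_cancel_left2)

lemma xs_lower: "xs (Suc j) - b2 \<ge> b2 * (1/q - 1) * real (Suc j)"
proof -
  have "-1 \<le> 1/q - 1" using q by simp
  from Bernoulli_inequality[OF this, of "Suc j"]
  have "1 + real (Suc j) * (1/q - 1) \<le> (1/q) ^ Suc j" by simp
  then have "b2 * (1 + real (Suc j) * (1/q - 1)) \<le> b2 * (1/q) ^ Suc j"
    by (rule mult_left_mono) (use b2_pos in simp)
  then show ?thesis by (simp add: xs_def algebra_simps)
qed

lemma sig_lower: "\<bar>sig (xs (Suc j))\<bar> \<ge> (1-q) * \<bar>tau1\<bar> * (b2 * (1/q - 1))^2 * real (Suc j)"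
proof -
  define y where "y = xs (Suc j)"
  define \<delta> where "\<delta> = b2 * (1/q - 1)"
  have dpos: "\<delta> > 0" using q b2_pos by (simp add: \<delta>_def)
  have y1: "y - b2 \<ge> \<delta> * real (Suc j)" using xs_lower[of j] by (simp add: y_def \<delta>_def)
  have y2: "y - a2 \<ge> y - b2" using zeros by simp
  have y0: "y - b2 \<ge> 0" using xs_Suc_gt[of j] by (simp add: y_def)
  have "\<bar>sig y\<bar> = (1-q) * \<bar>tau1\<bar> * ((y - a2) * (y - b2))"
    using q y0 y2 by (simp add: sig_def abs_mult)
  moreover have "(y - a2) * (y - b2) \<ge> (\<delta> * real (Suc j)) * (\<delta> * real (Suc j))"
    by (rule mult_mono) (use y1 y2 y0 dpos in auto)
  moreover have "(\<delta> * real (Suc j)) * (\<delta> * real (Suc j)) \<ge> \<delta>^2 * real (Suc j)"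
  proof -
    have "\<delta>^2 * real (Suc j) * 1 \<le> \<delta>^2 * real (Suc j) * real (Suc j)"
      by (rule mult_left_mono) auto
    then show ?thesis by (simp add: power2_eq_square algebra_simps)
  qed
  moreover have "(1-q) * \<bar>tau1\<bar> \<ge> 0" using q by simp
  ultimately have "\<bar>sig y\<bar> \<ge> (1-q) * \<bar>tau1\<bar> * (\<delta>^2 * real (Suc j))"
    by (metis mult_left_mono order_trans)
  then show ?thesis by (simp add: y_def \<delta>_def mult.assoc)
qed

lemma sig_nz: "sig (xs (Suc j)) \<noteq> 0"
  using xs_Suc_gt[of j] zeros q tau1 by (simp add: sig_def)

lemma summable_wx: "summable (\<lambda>j. w j * xs j ^ d)"
proof -
  define K where "K = 2 * \<bar>s0\<bar> * (1/q)^d"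
  define \<epsilon> where "\<epsilon> = (1-q) * \<bar>tau1\<bar> * (b2 * (1/q - 1))^2"
  have epos: "\<epsilon> > 0" using q tau1 b2_pos by (simp add: \<epsilon>_def)
  obtain N :: nat where N: "K / \<epsilon> < real N" using reals_Archimedean2 by blast
  show ?thesis
  proof (rule summable_ratio_test[where c = "1/2" and N = N])
    fix n assume n: "N \<le> n"
    define y where "y = xs (Suc n)"
    have sl: "\<bar>sig y\<bar> \<ge> \<epsilon> * real (Suc n)"
      using sig_lower[of n] by (simp add: y_def \<epsilon>_def)
    have "K < \<epsilon> * real N" using N epos by (simp add: divide_less_eq mult.commute)
    also have "\<dots> \<le> \<epsilon> * real (Suc n)" using n epos by simp
    finally have Ks: "K \<le> \<bar>sig y\<bar>" using sl by simp
    have sn: "sig y \<noteq> 0" using sig_nz[of n] by (simp add: y_def)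
    have wr: "w (Suc n) = w n * s0 / sig y"
      using w_ratio[of n] sn by (simp add: y_def field_simps)
    have "norm (w (Suc n) * xs (Suc n) ^ d) = w n * xs n ^ d * ((1/q)^d * \<bar>s0\<bar> / \<bar>sig y\<bar>)"
      using w_pos[of n] xs_pos[of n] q
      by (simp add: wr xs_Suc abs_mult power_divide field_simps)
    also have "(1/q)^d * \<bar>s0\<bar> / \<bar>sig y\<bar> \<le> 1/2"
    proof -
      have sp: "\<bar>sig y\<bar> > 0" using sn by simp
      show ?thesis using Ks by (subst pos_divide_le_eq[OF sp]) (simp add: K_def mult_ac)
    qed
    then have "w n * xs n ^ d * ((1/q)^d * \<bar>s0\<bar> / \<bar>sig y\<bar>) \<le> w n * xs n ^ d * (1/2)"
      using w_pos[of n] xs_pos[of n] by (intro mult_left_mono) auto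
    also have "\<dots> = 1/2 * norm (w n * xs n ^ d)"
      using w_pos[of n] xs_pos[of n] by (simp add: abs_mult)
    finally show "norm (w (Suc n) * xs (Suc n) ^ d) \<le> 1/2 * norm (w n * xs n ^ d)" .
  qed simp
qed

lemma poly_bound:
  fixes x :: real assumes x: "x > 0"
  shows "\<bar>poly p x\<bar> \<le> (\<Sum>i\<le>degree p. \<bar>coeff p i\<bar>) * (1 + x ^ degree p)"
proof -
  have "\<bar>poly p x\<bar> = \<bar>\<Sum>i\<le>degree p. coeff p i * x ^ i\<bar>" by (simp add: poly_altdef)
  also have "\<dots> \<le> (\<Sum>i\<le>degree p. \<bar>coeff p i * x ^ i\<bar>)" by (rule sum_abs)
  also have "\<dots> \<le> (\<Sum>i\<le>degree p. \<bar>coeff p i\<bar> * (1 + x ^ degree p))"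
  proof (rule sum_mono)
    fix i assume i: "i \<in> {..degree p}"
    have "x ^ i \<le> 1 + x ^ degree p"
    proof (cases "x \<le> 1")
      case True
      then have "x ^ i \<le> 1" using x by (simp add: power_le_one)
      then show ?thesis using x by (smt (verit) zero_le_power)
    next
      case False
      then have "x ^ i \<le> x ^ degree p" using i by (intro power_increasing) auto
      then show ?thesis by simp
    qed
    then show "\<bar>coeff p i * x ^ i\<bar> \<le> \<bar>coeff p i\<bar> * (1 + x ^ degree p)"
      using x by (simp add: abs_mult mult_left_mono)
  qed
  also have "\<dots> = (\<Sum>i\<le>degree p. \<bar>coeff p i\<bar>) * (1 + x ^ degree p)"
    by (simp add: sum_distrib_right)
  finally show ?thesis .
qed

lemma summable_wp_abs: "summable (\<lambda>j. w j * \<bar>poly p (xs j)\<bar>)"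
proof -
  define S where "S = (\<Sum>i\<le>degree p. \<bar>coeff p i\<bar>)"
  have "summable (\<lambda>j. S * (w j * xs j ^ 0) + S * (w j * xs j ^ degree p))"
    by (intro summable_add summable_mult summable_wx)
  then show ?thesis
  proof (rule summable_comparison_test'[where N=0])
    fix j
    have "w j * \<bar>poly p (xs j)\<bar> \<le> w j * (S * (1 + xs j ^ degree p))"
      using poly_bound[OF xs_pos[of j], of p] w_pos[of j] by (simp add: S_def mult_left_mono)
    then show "norm (w j * \<bar>poly p (xs j)\<bar>) \<le> S * (w j * xs j ^ 0) + S * (w j * xs j ^ degree p)"
      using w_pos[of j] by (simp add: algebra_simps)
  qed
qed

lemma summable_wp: "summable (\<lambda>j. w j * poly p (xs j))"
proof (rule summable_rabs_cancel)
  have "(\<lambda>n. \<bar>w n * poly p (xs n)\<bar>) = (\<lambda>n. w n * \<bar>poly p (xs n)\<bar>)"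
    using w_pos by (simp add: abs_mult abs_of_pos)
  then show "summable (\<lambda>n. \<bar>w n * poly p (xs n)\<bar>)" using summable_wp_abs[of p] by simp
qed

lemma A_bound: "\<bar>A (xs j)\<bar> \<le> \<bar>s0\<bar> * q^2 / ((1-q)^2 * b2^2)"
proof -
  have "b2^2 \<le> xs j ^ 2" using xs_ge[of j] b2_pos by (intro power_mono) auto
  then have "(1-q)^2 * b2^2 \<le> (1-q)^2 * xs j ^ 2" by (intro mult_left_mono) auto
  moreover have "(1-q)^2 * b2^2 > 0" using q b2_pos by simp
  ultimately show ?thesis unfolding A_def using q
    by (simp add: abs_mult frac_le divide_left_mono)
qed

lemma summable_cp: "summable (\<lambda>j. c j * poly p (xs j))"
proof -
  define K where "K = \<bar>s0\<bar> * q^2 / ((1-q)^2 * b2^2)"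
  have "summable (\<lambda>j. K * (w j * \<bar>poly p (xs j)\<bar>))"
    by (intro summable_mult summable_wp_abs)
  then show ?thesis
  proof (rule summable_comparison_test'[where N=0])
    fix j
    have "\<bar>A (xs j)\<bar> * (w j * \<bar>poly p (xs j)\<bar>) \<le> K * (w j * \<bar>poly p (xs j)\<bar>)"
      using A_bound[of j] w_pos[of j] by (intro mult_right_mono) (auto simp: K_def)
    then show "norm (c j * poly p (xs j)) \<le> K * (w j * \<bar>poly p (xs j)\<bar>)"
      using w_pos[of j] by (simp add: c_def abs_mult algebra_simps)
  qed
qed

lemma poly_shift: "poly p (xs (Suc j)) = poly (pcompose p [:0, 1/q:]) (xs j)"
  by (simp add: poly_pcompose xs_Suc)

lemma sym:
  fixes pf pg :: "real poly" and \<mu> :: real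
  assumes eig: "\<And>j. A (xs j) * (poly pf (xs j / q) - poly pf (xs j))
                   + B (xs j) * (poly pf (q * xs j) - poly pf (xs j)) = \<mu> * poly pf (xs j)"
  shows "\<mu> * (\<Sum>j. w j * poly pf (xs j) * poly pg (xs j)) =
     - (\<Sum>j. (poly pg (xs (Suc j)) - poly pg (xs j)) * (c j * (poly pf (xs (Suc j)) - poly pf (xs j))))"
proof -
  define f where "f = poly pf"
  define g where "g = poly pg"
  define F where "F j = c j * (f (xs (Suc j)) - f (xs j))" for j
  define a where "a j = w j * g (xs j) * (A (xs j) * (f (xs j / q) - f (xs j))
                   + B (xs j) * (f (q * xs j) - f (xs j)))" for j
  define Df where "Df = pcompose pf [:0, 1/q:] - pf"
  define Dg where "Dg = pcompose pg [:0, 1/q:] - pg"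
  have Fp: "F j = c j * poly Df (xs j)" for j
    by (simp add: F_def Df_def f_def poly_shift)
  have a_eq: "a j = \<mu> * (w j * poly (pf * pg) (xs j))" for j
    using eig[of j] by (simp add: a_def f_def g_def)
  have a0: "a 0 = g 0 * F 0" if False for dummy using that by simp
  have "suminf a = - suminf (\<lambda>j. (g (xs (Suc j)) - g (xs j)) * F j)"
  proof (rule sum_parts[where g = "\<lambda>j. g (xs j)"])
    show "a 0 = g (xs 0) * F 0"
      using B0 by (simp add: a_def F_def c_def xs_Suc)
    show "a (Suc i) = g (xs (Suc i)) * (F (Suc i) - F i)" for i
    proof -
      have e1: "q * xs (Suc i) = xs i" using q by (simp add: xs_Suc)
      have e2: "xs (Suc i) / q = xs (Suc (Suc i))" by (simp add: xs_Suc)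
      have cS: "c (Suc i) = w (Suc i) * A (xs (Suc i))" by (simp add: c_def)
      show ?thesis unfolding a_def F_def e1 e2 cS c_alt[of i] by (simp add: algebra_simps)
    qed
    show "summable a" unfolding a_eq by (intro summable_mult summable_wp)
    show "summable (\<lambda>j. (g (xs (Suc j)) - g (xs j)) * F j)"
    proof -
      have "(\<lambda>j. (g (xs (Suc j)) - g (xs j)) * F j) = (\<lambda>j. c j * poly (Dg * Df) (xs j))"
        by (auto simp: Fp Dg_def g_def poly_shift)
      then show ?thesis using summable_cp[of "Dg * Df"] by (simp only: poly_mult)
    qed
    show "(\<lambda>j. g (xs j) * F j) \<longlonglongrightarrow> 0"
    proof -
      have "(\<lambda>j. g (xs j) * F j) = (\<lambda>j. c j * poly (pg * Df) (xs j))"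
        by (auto simp: Fp g_def)
      then show ?thesis using summable_LIMSEQ_zero[OF summable_cp[of "pg * Df"]] by (simp only: poly_mult)
    qed
  qed
  moreover have "suminf a = \<mu> * (\<Sum>j. w j * poly pf (xs j) * poly pg (xs j))"
    unfolding a_eq using summable_wp[of "pf * pg"] by (subst suminf_mult) (auto simp: mult.assoc)
  ultimately show ?thesis by (simp add: F_def f_def g_def)
qed

end



theorem theorem5p8:
  fixes q s0 tau1 tau0 a2 b2 :: real and \<alpha> :: complex
  assumes q: "0 < q" "q < 1"
    and s0: "s0 \<noteq> 0"
    and tau1: "tau1 \<noteq> 0"
    and fact: "\<forall>x. q * (s0 + (1 - 1/q) * x * (tau1 * x + tau0))
                    = (q - 1) * tau1 * (x - a2) * (x - b2)"
    and zeros: "0 < a2" "a2 \<le> b2"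
    and Lam: "tau1 / s0 < 0"
    and alpha: "exp (\<alpha> * of_real (ln q)) = of_real ((1/q) * ((q - 1) * tau1) / s0)"
  shows "\<exists>(P :: nat \<Rightarrow> real poly) (d :: nat \<Rightarrow> complex).
     (\<forall>n. degree (P n) = n \<and>
          qEHT q (\<lambda>x. s0) (\<lambda>x. tau1 * x + tau0)
               (qlambda q n tau1 (deriv (deriv (\<lambda>x. s0)) 0)) (poly (P n)) \<and>
          d n \<noteq> 0) \<and>
     (\<forall>m n. jackson_inf_has q
        (\<lambda>x. of_real (poly (P n) x * poly (P m) x)
             * (exp (\<alpha> * of_real (ln \<bar>x\<bar>))
                * of_real (exp ((ln x / ln q - 1) * ln x)
                           * qpoch_inf (q * a2 / x) q * qpoch_inf (q * b2 / x) q)))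
        b2 (if m = n then d n else 0))"
proof -
  interpret S: qsetup q s0 tau1 tau0 a2 b2
    using assms by unfold_locales auto
  have "\<forall>n. \<exists>P. degree P = n \<and> P \<noteq> 0 \<and>
     qEHT q (\<lambda>x. s0) (\<lambda>x. tau1 * x + tau0)
               (qlambda q n tau1 (deriv (deriv (\<lambda>x. s0)) 0)) (poly P)"
    using eig_exists[OF q tau1] by blast
  then obtain P where P: "\<And>n. degree (P n) = n \<and> P n \<noteq> 0 \<and>
     qEHT q (\<lambda>x. s0) (\<lambda>x. tau1 * x + tau0)
               (qlambda q n tau1 (deriv (deriv (\<lambda>x. s0)) 0)) (poly (P n))"
    by metis
  have d0: "deriv (\<lambda>x::real. s0) = (\<lambda>x. 0)"
    by (rule ext, rule DERIV_imp_deriv) simp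
  have d1: "deriv (\<lambda>x::real. 0::real) 0 = 0"
    by (rule DERIV_imp_deriv) simp
  have lam: "qlambda q n tau1 (deriv (deriv (\<lambda>x. s0)) 0) = - qn q n * tau1" for n
    using q by (simp add: d0 d1 qlambda_def qnum_def qn_def powr_realpow)
  define \<mu> where "\<mu> n = qn q n * tau1" for n
  have eig: "S.A (S.xs j) * (poly (P n) (S.xs j / q) - poly (P n) (S.xs j))
     + S.B (S.xs j) * (poly (P n) (q * S.xs j) - poly (P n) (S.xs j)) = \<mu> n * poly (P n) (S.xs j)" for n j
  proof -
    have "s0 * qD (1/q) (qD q (poly (P n))) (S.xs j) + (tau1 * S.xs j + tau0) * qD q (poly (P n)) (S.xs j)
       + (- qn q n * tau1) * poly (P n) (S.xs j) = 0"
      using P[of n] lam[of n] unfolding qEHT_def by metis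
    moreover have "S.xs j \<noteq> 0" using S.xs_pos[of j] by simp
    ultimately show ?thesis using S.Lop[of "S.xs j" "poly (P n)"] by (simp add: \<mu>_def algebra_simps)
  qed
  define I where "I n m = (\<Sum>j. S.w j * poly (P n) (S.xs j) * poly (P m) (S.xs j))" for n m
  define H where "H n m = (\<Sum>j. (poly (P m) (S.xs (Suc j)) - poly (P m) (S.xs j)) *
        (S.c j * (poly (P n) (S.xs (Suc j)) - poly (P n) (S.xs j))))" for n m
  have symI: "\<mu> n * I n m = - H n m" for n m
    unfolding I_def H_def by (rule S.sym[OF eig])
  have Ic: "I n m = I m n" for n m unfolding I_def by (simp add: mult_ac)
  have Hc: "H n m = H m n" for n m unfolding H_def by (simp add: mult_ac)
  have orth: "I n m = 0" if "n \<noteq> m" for n m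
  proof -
    have "\<mu> n * I n m = \<mu> m * I n m" using symI[of n m] symI[of m n] Ic Hc by simp
    moreover have "\<mu> n \<noteq> \<mu> m" using qn_inj[OF q, of n m] that tau1 by (auto simp: \<mu>_def)
    ultimately show ?thesis by simp
  qed
  have Ipos: "I n n > 0" for n
  proof -
    have fin: "finite {x. poly (P n) x = 0}" using P[of n] poly_roots_finite by blast
    have sm: "strict_mono S.xs"
      unfolding strict_mono_Suc_iff using S.xs_pos q by (simp add: S.xs_Suc divide_simps)
    then have "inj S.xs" by (rule strict_mono_imp_inj_on)
    then have "finite (S.xs -` {x. poly (P n) x = 0})" using fin by (metis finite_vimageI)
    then obtain j where j: "j \<notin> S.xs -` {x. poly (P n) x = 0}"
      using infinite_UNIV_nat by (metis UNIV_I finite_subset subsetI)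
    show ?thesis unfolding I_def
    proof (rule suminf_pos2)
      show "summable (\<lambda>j. S.w j * poly (P n) (S.xs j) * poly (P n) (S.xs j))"
        using S.summable_wp[of "P n * P n"] by (simp add: mult.assoc)
      show "0 \<le> S.w k * poly (P n) (S.xs k) * poly (P n) (S.xs k)" for k
        using S.w_pos[of k] by (simp add: mult.assoc)
      show "0 < S.w j * poly (P n) (S.xs j) * poly (P n) (S.xs j)"
      proof -
        have "poly (P n) (S.xs j) * poly (P n) (S.xs j) > 0" using j by (simp add: zero_less_mult_iff) (metis linorder_neqE_linordered_idom)
        then show ?thesis using S.w_pos[of j] by (simp add: mult.assoc)
      qed
    qed
  qed
  define E where "E = exp (\<alpha> * of_real (ln b2))"
  define d where "d n = E * of_real (I n n)" for n
  have dnz: "d n \<noteq> 0" for n using Ipos[of n] by (simp add: d_def E_def)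
  have termj: "of_real ((1/q - 1) * b2 * (1/q) ^ j) *
       (of_real (poly (P n) ((1/q) ^ j * b2) * poly (P m) ((1/q) ^ j * b2))
             * (exp (\<alpha> * of_real (ln \<bar>(1/q) ^ j * b2\<bar>))
                * of_real (exp ((ln ((1/q) ^ j * b2) / ln q - 1) * ln ((1/q) ^ j * b2))
                           * qpoch_inf (q * a2 / ((1/q) ^ j * b2)) q * qpoch_inf (q * b2 / ((1/q) ^ j * b2)) q)))
     = E * of_real (S.w j * poly (P n) (S.xs j) * poly (P m) (S.xs j))" for n m j
  proof -
    have xj: "(1/q) ^ j * b2 = S.xs j" by (simp add: S.xs_def)
    have ab: "\<bar>S.xs j\<bar> = S.xs j" using S.xs_pos[of j] by simp
    have ln: "ln (S.xs j) = ln b2 - real j * ln q"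
      using q S.b2_pos by (simp add: S.xs_def ln_mult ln_realpow ln_div)
    have ex: "exp (\<alpha> * of_real (ln (S.xs j))) = E * of_real ((1/S.cr) ^ j)"
    proof -
      have "\<alpha> * of_real (ln (S.xs j)) = \<alpha> * of_real (ln b2) - of_nat j * (\<alpha> * of_real (ln q))"
        unfolding ln by (simp add: algebra_simps)
      then have "exp (\<alpha> * of_real (ln (S.xs j))) = E / exp (\<alpha> * of_real (ln q)) ^ j"
        by (simp add: exp_diff exp_of_nat_mult E_def)
      also have "exp (\<alpha> * of_real (ln q)) = of_real S.cr" using alpha by (simp add: S.cr_def)
      finally show ?thesis by (simp add: power_divide divide_inverse power_inverse)
    qed
    show ?thesis unfolding xj ab ex
      by (simp add: S.w_def S.W_def mult_ac)
  qed
  show ?thesis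
  proof (intro exI conjI allI)
    fix n show "degree (P n) = n" using P by blast
  next
    fix n show "qEHT q (\<lambda>x. s0) (\<lambda>x. tau1 * x + tau0)
               (qlambda q n tau1 (deriv (deriv (\<lambda>x. s0)) 0)) (poly (P n))" using P by blast
  next
    fix n show "d n \<noteq> 0" by (rule dnz)
  next
    fix m n
    have sm: "summable (\<lambda>j. S.w j * poly (P n) (S.xs j) * poly (P m) (S.xs j))"
      using S.summable_wp[of "P n * P m"] by (simp add: mult.assoc)
    have "(\<lambda>j. E * of_real (S.w j * poly (P n) (S.xs j) * poly (P m) (S.xs j))) sums (E * of_real (I n m))"
      unfolding I_def by (intro sums_mult sums_of_real summable_sums sm)
    moreover have "E * of_real (I n m) = (if m = n then d n else 0)"
      using orth[of n m] by (auto simp: d_def)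
    ultimately show "jackson_inf_has q
        (\<lambda>x. of_real (poly (P n) x * poly (P m) x)
             * (exp (\<alpha> * of_real (ln \<bar>x\<bar>))
                * of_real (exp ((ln x / ln q - 1) * ln x)
                           * qpoch_inf (q * a2 / x) q * qpoch_inf (q * b2 / x) q)))
        b2 (if m = n then d n else 0)"
      unfolding jackson_inf_has_def termj by simp
  qed
qed


end
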